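(* Let $L:\mathcal{R}\to\mathbb{R}^{\mathcal{Y}}_+$ be a loss with a finite representative set $\mathcal{R}'$. Then $\mathcal{R}'$ is a minimum representative set for $L$ if and only if $L|_{\mathcal{R}'}$ is non-redundant.
   Context: $\mathcal{Y}$ is a finite label set, $\Delta_{\mathcal{Y}}$ the simplex, $\mathbb{R}^{\mathcal{Y}}_+$ the nonnegative orthant. A loss $L:\mathcal{R}\to\mathbb{R}^{\mathcal{Y}}_+$ is minimizable if $\inf_r\langle p,L(r)\rangle$ is attained for every $p$; it then elicits $\Gamma=\mathrm{prop}[L]$, $\Gamma(p)=\arg\min_r\langle p,L(r)\rangle$, with level sets $\Gamma_r=\{p:r\in\Gamma(p)\}$. $\mathcal{S}$ is representative for $L$ if $\Gamma(p)\cap\mathcal{S}\neq\emptyset$ for all $p$; minimum representative if it has smallest cardinality among representative sets. $L|_{\mathcal{R}'}$ is the restriction of $L$ to $\mathcal{R}'$. A minimizable loss with report set $\mathcal{R}''$ eliciting $\Gamma$ is redundant if there are $r\neq r'$ in $\mathcal{R}''$ with $\Gamma_r\subseteq\Gamma_{r'}$, and non-redundant otherwise. *)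

theory Defs
  imports Complex_Main "HOL-Library.Equipollence"
begin

definition simplex :: "('y::finite \<Rightarrow> real) set" where
  "simplex = {p. (\<forall>y. 0 \<le> p y) \<and> (\<Sum>y\<in>UNIV. p y) = 1}"

definition exp_loss :: "('r \<Rightarrow> 'y::finite \<Rightarrow> real) \<Rightarrow> ('y \<Rightarrow> real) \<Rightarrow> 'r \<Rightarrow> real" where
  "exp_loss L p r = (\<Sum>y\<in>UNIV. p y * L r y)"

definition prop_on :: "('r \<Rightarrow> 'y::finite \<Rightarrow> real) \<Rightarrow> 'r set \<Rightarrow> ('y \<Rightarrow> real) \<Rightarrow> 'r set" where
  "prop_on L R p = {r \<in> R. \<forall>r'\<in>R. exp_loss L p r \<le> exp_loss L p r'}"

definition minimizable_on :: "('r \<Rightarrow> 'y::finite \<Rightarrow> real) \<Rightarrow> 'r set \<Rightarrow> bool" where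
  "minimizable_on L R \<longleftrightarrow> (\<forall>p\<in>simplex. prop_on L R p \<noteq> {})"

definition level_set :: "('r \<Rightarrow> 'y::finite \<Rightarrow> real) \<Rightarrow> 'r set \<Rightarrow> 'r \<Rightarrow> ('y \<Rightarrow> real) set" where
  "level_set L R r = {p \<in> simplex. r \<in> prop_on L R p}"

definition representative :: "('r \<Rightarrow> 'y::finite \<Rightarrow> real) \<Rightarrow> 'r set \<Rightarrow> bool" where
  "representative L S \<longleftrightarrow> (\<forall>p\<in>simplex. prop_on L UNIV p \<inter> S \<noteq> {})"

definition min_representative :: "('r \<Rightarrow> 'y::finite \<Rightarrow> real) \<Rightarrow> 'r set \<Rightarrow> bool" where
  "min_representative L S \<longleftrightarrow> representative L S \<and> (\<forall>T. representative L T \<longrightarrow> S \<lesssim> T)"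

definition redundant_on :: "('r \<Rightarrow> 'y::finite \<Rightarrow> real) \<Rightarrow> 'r set \<Rightarrow> bool" where
  "redundant_on L R \<longleftrightarrow>
     (\<exists>r\<in>R. \<exists>r'\<in>R. r \<noteq> r' \<and> level_set L R r \<subseteq> level_set L R r')"

definition non_redundant_on :: "('r \<Rightarrow> 'y::finite \<Rightarrow> real) \<Rightarrow> 'r set \<Rightarrow> bool" where
  "non_redundant_on L R \<longleftrightarrow> minimizable_on L R \<and> \<not> redundant_on L R"

end

theory Submission
  imports Defs
begin

lemma exp_loss_avg:
  fixes L :: "'r \<Rightarrow> 'y::finite \<Rightarrow> real"
  shows "exp_loss L (\<lambda>y. (\<Sum>s\<in>F. P s y) / n) r = (\<Sum>s\<in>F. exp_loss L (P s) r) / n"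
proof -
  have "exp_loss L (\<lambda>y. (\<Sum>s\<in>F. P s y) / n) r = (\<Sum>y\<in>UNIV. \<Sum>s\<in>F. P s y * L r y / n)"
    unfolding exp_loss_def by (simp add: sum_divide_distrib sum_distrib_right)
  also have "\<dots> = (\<Sum>s\<in>F. \<Sum>y\<in>UNIV. P s y * L r y / n)" by (rule sum.swap)
  also have "\<dots> = (\<Sum>s\<in>F. exp_loss L (P s) r) / n"
    unfolding exp_loss_def by (simp add: sum_divide_distrib)
  finally show ?thesis .
qed

lemma cover:
  fixes L :: "'r \<Rightarrow> 'y::finite \<Rightarrow> real"
  assumes finF: "finite F" and p0: "p0 \<in> simplex" "\<forall>r. exp_loss L p0 t \<le> exp_loss L p0 r"
    and cov: "\<forall>p\<in>simplex. (\<forall>r. exp_loss L p t \<le> exp_loss L p r) \<longrightarrow> (\<exists>s\<in>F. exp_loss L p s = exp_loss L p t)"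
  shows "\<exists>s\<in>F. \<forall>p\<in>simplex. (\<forall>r. exp_loss L p t \<le> exp_loss L p r) \<longrightarrow> exp_loss L p s = exp_loss L p t"
proof (rule ccontr)
  assume "\<not> ?thesis"
  hence "\<forall>s\<in>F. \<exists>p. p \<in> simplex \<and> (\<forall>r. exp_loss L p t \<le> exp_loss L p r) \<and> exp_loss L p s \<noteq> exp_loss L p t"
    by blast
  from bchoice[OF this] obtain P where P0: "\<forall>s\<in>F. P s \<in> simplex \<and> (\<forall>r. exp_loss L (P s) t \<le> exp_loss L (P s) r) \<and> exp_loss L (P s) s \<noteq> exp_loss L (P s) t"
    by (elim exE)
  hence P: "\<And>s. s \<in> F \<Longrightarrow> P s \<in> simplex \<and> (\<forall>r. exp_loss L (P s) t \<le> exp_loss L (P s) r) \<and> exp_loss L (P s) s \<noteq> exp_loss L (P s) t"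
    by blast
  have Fne: "F \<noteq> {}" using cov p0 by blast
  define n where "n = real (card F)"
  have npos: "n > 0" using Fne finF n_def by (simp add: card_gt_0_iff)
  define q where "q = (\<lambda>y. (\<Sum>s\<in>F. P s y) / n)"
  have qs: "q \<in> simplex"
  proof -
    have "\<forall>y. 0 \<le> q y" unfolding q_def using P npos
      by (auto intro!: divide_nonneg_pos sum_nonneg simp: simplex_def)
    moreover have "(\<Sum>y\<in>UNIV. q y) = 1"
    proof -
      have "(\<Sum>y\<in>UNIV. q y) = (\<Sum>y\<in>UNIV. \<Sum>s\<in>F. P s y / n)"
        unfolding q_def by (simp add: sum_divide_distrib)
      also have "\<dots> = (\<Sum>s\<in>F. \<Sum>y\<in>UNIV. P s y / n)" by (rule sum.swap)
      also have "\<dots> = (\<Sum>s\<in>F. (\<Sum>y\<in>UNIV. P s y)) / n"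
        by (simp add: sum_divide_distrib)
      also have "\<dots> = (\<Sum>s\<in>F. 1) / n" using P by (simp add: simplex_def)
      also have "\<dots> = 1" using npos n_def by simp
      finally show ?thesis .
    qed
    ultimately show ?thesis by (simp add: simplex_def)
  qed
  have qopt: "\<forall>r. exp_loss L q t \<le> exp_loss L q r"
  proof
    fix r
    have "(\<Sum>s\<in>F. exp_loss L (P s) t) \<le> (\<Sum>s\<in>F. exp_loss L (P s) r)"
      using P by (intro sum_mono) blast
    thus "exp_loss L q t \<le> exp_loss L q r"
      unfolding q_def exp_loss_avg using npos by (simp add: divide_right_mono)
  qed
  then obtain s where s: "s \<in> F" "exp_loss L q s = exp_loss L q t" using cov qs by blast
  have "(\<Sum>s'\<in>F. exp_loss L (P s') s - exp_loss L (P s') t) > 0"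
  proof -
    have "(\<Sum>s'\<in>F. exp_loss L (P s') s - exp_loss L (P s') t)
        = (exp_loss L (P s) s - exp_loss L (P s) t) + (\<Sum>s'\<in>F-{s}. exp_loss L (P s') s - exp_loss L (P s') t)"
      using s(1) finF by (simp add: sum.remove)
    moreover have "(\<Sum>s'\<in>F-{s}. exp_loss L (P s') s - exp_loss L (P s') t) \<ge> 0"
      using P by (intro sum_nonneg) auto
    moreover have "exp_loss L (P s) s - exp_loss L (P s) t > 0"
    proof -
      have h1: "exp_loss L (P s) t \<le> exp_loss L (P s) s" and h2: "exp_loss L (P s) s \<noteq> exp_loss L (P s) t"
        using P[OF s(1)] by auto
      have "exp_loss L (P s) t < exp_loss L (P s) s" by (rule le_neq_trans[OF h1 not_sym[OF h2]])
      thus ?thesis by simp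
    qed
    ultimately show ?thesis by linarith
  qed
  moreover have "exp_loss L q s - exp_loss L q t = (\<Sum>s'\<in>F. exp_loss L (P s') s - exp_loss L (P s') t) / n"
    unfolding q_def exp_loss_avg by (simp add: sum_subtractf diff_divide_distrib)
  ultimately have gt: "(\<Sum>s'\<in>F. exp_loss L (P s') s - exp_loss L (P s') t) > 0"
    and eq: "exp_loss L q s - exp_loss L q t = (\<Sum>s'\<in>F. exp_loss L (P s') s - exp_loss L (P s') t) / n" .
  have "(\<Sum>s'\<in>F. exp_loss L (P s') s - exp_loss L (P s') t) / n = 0" using eq s(2) by linarith
  hence "(\<Sum>s'\<in>F. exp_loss L (P s') s - exp_loss L (P s') t) = 0" using npos by simp
  thus False using gt by linarith
qed

lemma repD:
  assumes "representative L T" "p \<in> simplex"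
  obtains r where "r \<in> prop_on L UNIV p" "r \<in> T"
proof -
  have "prop_on L UNIV p \<inter> T \<noteq> {}" using assms unfolding representative_def by (rule bspec)
  thus ?thesis using that by (meson disjoint_iff)
qed

lemma redI:
  assumes "r \<in> R" "r' \<in> R" "r \<noteq> r'" "level_set L R r \<subseteq> level_set L R r'"
  shows "redundant_on L R"
  unfolding redundant_on_def using assms by (intro bexI[of _ r] bexI[of _ r'] conjI)

lemma propU: "t \<in> prop_on L UNIV p \<longleftrightarrow> (\<forall>r. exp_loss L p t \<le> exp_loss L p r)"
  by (simp add: prop_on_def)

theorem proposition4:
  fixes L :: "'r \<Rightarrow> 'y::finite \<Rightarrow> real" and S :: "'r set"
  assumes nonneg: "\<And>r y. 0 \<le> L r y"
    and fin: "finite S"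
    and rep: "representative L S"
  shows "min_representative L S \<longleftrightarrow> non_redundant_on L S"
proof -
  have eqS: "prop_on L S p = prop_on L UNIV p \<inter> S" if ps: "p \<in> simplex" for p
  proof
    obtain r0 where r0: "r0 \<in> prop_on L UNIV p" "r0 \<in> S" using repD[OF rep ps] by metis
    show "prop_on L S p \<subseteq> prop_on L UNIV p \<inter> S"
    proof
      fix r assume r: "r \<in> prop_on L S p"
      have "r \<in> S" "exp_loss L p r \<le> exp_loss L p r0" using r r0(2) unfolding prop_on_def by blast+
      moreover have "\<forall>x. exp_loss L p r0 \<le> exp_loss L p x" using r0 by (simp add: prop_on_def)
      ultimately have "\<forall>x. exp_loss L p r \<le> exp_loss L p x" by (meson order_trans)
      thus "r \<in> prop_on L UNIV p \<inter> S" using \<open>r \<in> S\<close> by (simp add: prop_on_def)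
    qed
    show "prop_on L UNIV p \<inter> S \<subseteq> prop_on L S p" by (auto simp: prop_on_def)
  qed
  have lvl: "p \<in> level_set L S r \<longleftrightarrow> p \<in> simplex \<and> r \<in> S \<and> (\<forall>x. exp_loss L p r \<le> exp_loss L p x)" for p r
  proof -
    have "r \<in> prop_on L S p \<longleftrightarrow> r \<in> S \<and> (\<forall>x. exp_loss L p r \<le> exp_loss L p x)" if "p \<in> simplex"
      using eqS[OF that] by (simp add: propU conj_commute)
    thus ?thesis unfolding level_set_def by blast
  qed
  have minz: "minimizable_on L S"
    unfolding minimizable_on_def
  proof
    fix p :: "'y \<Rightarrow> real" assume p: "p \<in> simplex"
    obtain x where "x \<in> prop_on L UNIV p" "x \<in> S" using repD[OF rep p] by metis
    thus "prop_on L S p \<noteq> {}" using eqS[OF p] by blast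
  qed
  show ?thesis
  proof
    assume mr: "min_representative L S"
    have "\<not> redundant_on L S"
    proof
      assume "redundant_on L S"
      then obtain r r' where rr: "r \<in> S" "r' \<in> S" "r \<noteq> r'" "level_set L S r \<subseteq> level_set L S r'"
        unfolding redundant_on_def by blast
      have "representative L (S - {r})"
        unfolding representative_def
      proof
        fix p :: "'y \<Rightarrow> real" assume p: "p \<in> simplex"
        obtain x where x: "x \<in> prop_on L UNIV p" "x \<in> S" using repD[OF rep p] by metis
        show "prop_on L UNIV p \<inter> (S - {r}) \<noteq> {}"
        proof (cases "x = r")
          case True
          hence "p \<in> level_set L S r" using lvl x p by (simp add: propU)
          hence "p \<in> level_set L S r'" using rr by blast
          hence "r' \<in> prop_on L UNIV p" using lvl by (simp add: propU)
          thus ?thesis using rr by blast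
        next
          case False thus ?thesis using x by blast
        qed
      qed
      hence "S \<lesssim> S - {r}" using mr unfolding min_representative_def by blast
      then obtain f where "inj_on f S" "f ` S \<subseteq> S - {r}" unfolding lepoll_def by blast
      hence "card S \<le> card (S - {r})" using fin by (meson card_inj_on_le finite_Diff)
      moreover have "card (S - {r}) < card S" using fin rr(1) by (rule card_Diff1_less)
      ultimately show False by simp
    qed
    thus "non_redundant_on L S" using minz unfolding non_redundant_on_def by blast
  next
    assume nr: "non_redundant_on L S"
    hence nred: "\<not> redundant_on L S" unfolding non_redundant_on_def by blast
    have uniq: "\<exists>p\<in>simplex. prop_on L UNIV p \<inter> S = {r}" if rS: "r \<in> S" for r
    proof (cases "S = {r}")
      case True
      have "(\<lambda>_::'y. 1 / real (card (UNIV :: 'y set))) \<in> simplex" by (simp add: simplex_def)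
      then obtain x where "x \<in> prop_on L UNIV (\<lambda>_::'y. 1 / real (card (UNIV :: 'y set)))" "x \<in> S"
        using repD[OF rep] by metis
      hence "prop_on L UNIV (\<lambda>_::'y. 1 / real (card (UNIV :: 'y set))) \<inter> S = {r}" using True by blast
      thus ?thesis using \<open>(\<lambda>_::'y. 1 / real (card (UNIV :: 'y set))) \<in> simplex\<close> by blast
    next
      case False
      then obtain r' where r': "r' \<in> S" "r' \<noteq> r" using rS by blast
      have "level_set L S r \<noteq> {}"
      proof
        assume "level_set L S r = {}"
        hence "level_set L S r \<subseteq> level_set L S r'" by simp
        moreover have "r \<noteq> r'" using r'(2) by simp
        ultimately have "redundant_on L S" using rS r'(1) by (intro redI)
        thus False using nred by simp
      qed
      then obtain p0 where p0: "p0 \<in> level_set L S r" by blast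
      show ?thesis
      proof (rule ccontr)
        assume nu: "\<not> ?thesis"
        have "\<exists>s\<in>S - {r}. \<forall>p\<in>simplex. (\<forall>x. exp_loss L p r \<le> exp_loss L p x) \<longrightarrow> exp_loss L p s = exp_loss L p r"
        proof (rule cover)
          show "finite (S - {r})" using fin by simp
          show "p0 \<in> simplex" "\<forall>x. exp_loss L p0 r \<le> exp_loss L p0 x" using p0 lvl by auto
          show "\<forall>p\<in>simplex. (\<forall>x. exp_loss L p r \<le> exp_loss L p x) \<longrightarrow> (\<exists>s\<in>S - {r}. exp_loss L p s = exp_loss L p r)"
          proof (intro ballI impI)
            fix p :: "'y \<Rightarrow> real" assume p: "p \<in> simplex" and opt: "\<forall>x. exp_loss L p r \<le> exp_loss L p x"
            have "r \<in> prop_on L UNIV p \<inter> S" using opt rS by (simp add: propU)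
            hence "prop_on L UNIV p \<inter> S \<noteq> {r}" using nu p by blast
            then obtain s where "s \<in> prop_on L UNIV p" "s \<in> S" "s \<noteq> r"
              using \<open>r \<in> prop_on L UNIV p \<inter> S\<close> by blast
            hence "exp_loss L p s \<le> exp_loss L p r" by (simp add: propU)
            moreover have "exp_loss L p r \<le> exp_loss L p s" using opt by blast
            ultimately have "exp_loss L p s = exp_loss L p r" by (rule order_antisym)
            thus "\<exists>s\<in>S - {r}. exp_loss L p s = exp_loss L p r"
              using \<open>s \<in> S\<close> \<open>s \<noteq> r\<close> by blast
          qed
        qed
        then obtain s where s: "s \<in> S" "s \<noteq> r" "\<forall>p\<in>simplex. (\<forall>x. exp_loss L p r \<le> exp_loss L p x) \<longrightarrow> exp_loss L p s = exp_loss L p r"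
          by blast
        have "level_set L S r \<subseteq> level_set L S s"
        proof
          fix p assume "p \<in> level_set L S r"
          hence ps: "p \<in> simplex" and opt: "\<forall>x. exp_loss L p r \<le> exp_loss L p x" using lvl by auto
          hence "exp_loss L p s = exp_loss L p r" using s(3) by blast
          hence "\<forall>x. exp_loss L p s \<le> exp_loss L p x" using opt by simp
          thus "p \<in> level_set L S s" using lvl s(1) ps by simp
        qed
        moreover have "r \<noteq> s" using s(2) by simp
        ultimately have "redundant_on L S" using s(1) rS by (intro redI)
        thus False using nred by simp
      qed
    qed
    hence "\<forall>r\<in>S. \<exists>p. p \<in> simplex \<and> prop_on L UNIV p \<inter> S = {r}" by blast
    from bchoice[OF this] obtain P where P0: "\<forall>r\<in>S. P r \<in> simplex \<and> prop_on L UNIV (P r) \<inter> S = {r}"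
      by (elim exE)
    hence P: "\<And>r. r \<in> S \<Longrightarrow> P r \<in> simplex \<and> prop_on L UNIV (P r) \<inter> S = {r}" by blast
    have "S \<lesssim> T" if T: "representative L T" for T
    proof -
      define f where "f r = (SOME t. t \<in> prop_on L UNIV (P r) \<inter> T)" for r
      have f: "f r \<in> prop_on L UNIV (P r) \<inter> T" if rS2: "r \<in> S" for r
      proof -
        obtain t0 where "t0 \<in> prop_on L UNIV (P r)" "t0 \<in> T" using repD[OF T] P[OF rS2] by metis
        hence "\<exists>t. t \<in> prop_on L UNIV (P r) \<inter> T" by blast
        thus ?thesis unfolding f_def by (rule someI_ex)
      qed
      have "inj_on f S"
      proof
        fix r r' assume rs: "r \<in> S" "r' \<in> S" and eq: "f r = f r'"
        define t where "t = f r"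
        have "\<exists>s\<in>S. \<forall>p\<in>simplex. (\<forall>x. exp_loss L p t \<le> exp_loss L p x) \<longrightarrow> exp_loss L p s = exp_loss L p t"
        proof (rule cover)
          show "finite S" by (rule fin)
          show "P r \<in> simplex" "\<forall>x. exp_loss L (P r) t \<le> exp_loss L (P r) x"
            using P[OF rs(1)] f[OF rs(1)] by (auto simp: t_def propU)
          show "\<forall>p\<in>simplex. (\<forall>x. exp_loss L p t \<le> exp_loss L p x) \<longrightarrow> (\<exists>s\<in>S. exp_loss L p s = exp_loss L p t)"
          proof (intro ballI impI)
            fix p :: "'y \<Rightarrow> real" assume p: "p \<in> simplex" and opt: "\<forall>x. exp_loss L p t \<le> exp_loss L p x"
            obtain s where "s \<in> prop_on L UNIV p" "s \<in> S" using repD[OF rep p] by metis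
            hence "exp_loss L p s \<le> exp_loss L p t" by (simp add: propU)
            moreover have "exp_loss L p t \<le> exp_loss L p s" using opt by blast
            ultimately have "exp_loss L p s = exp_loss L p t" by (rule order_antisym)
            thus "\<exists>s\<in>S. exp_loss L p s = exp_loss L p t"
              using \<open>s \<in> S\<close> by blast
          qed
        qed
        then obtain s where s: "s \<in> S" "\<forall>p\<in>simplex. (\<forall>x. exp_loss L p t \<le> exp_loss L p x) \<longrightarrow> exp_loss L p s = exp_loss L p t"
          by blast
        have key: "s = q" if q: "q \<in> S" "f q = t" for q
        proof -
          have "\<forall>x. exp_loss L (P q) t \<le> exp_loss L (P q) x" "P q \<in> simplex"
            using f[OF q(1)] P[OF q(1)] q(2) by (auto simp: propU)
          hence "s \<in> prop_on L UNIV (P q) \<inter> S" using s by (auto simp: propU)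
          thus ?thesis using P[OF q(1)] by blast
        qed
        have "s = r" using key[OF rs(1)] t_def by blast
        moreover have "f r' = t" unfolding t_def using eq by (rule sym)
        hence "s = r'" using key[OF rs(2)] by blast
        ultimately show "r = r'" by simp
      qed
      moreover have "f ` S \<subseteq> T" using f by blast
      ultimately show ?thesis unfolding lepoll_def by (intro exI[of _ f] conjI)
    qed
    thus "min_representative L S" using rep unfolding min_representative_def by blast
  qed
qed

end
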